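(* Let $\{a,b\}$ be a $2$-element generating set of a finite abelian group $G$. For every integer $k$ with $0\le k<|G|$, there is a spanning quasi-path $P$ in $\mathrm{Cay}(G;a,b)$ such that $\delta_b(P)=k$.
   Context: The Cayley digraph $\mathrm{Cay}(G;a,b)$ has vertex set $G$ and an arc from $v$ to $v+s$ for all $v\in G$, $s\in\{a,b\}$; such an arc is an $s$-edge, and $\delta_b(P)$ denotes the number of $b$-edges in a subdigraph $P$. A spanning quasi-path in a digraph is a spanning subdigraph such that exactly one connected component is a directed path and all other components are directed cycles. *)

theory Defs
  imports Main
begin

inductive_set gen2 :: "'a::ab_group_add \<Rightarrow> 'a \<Rightarrow> 'a set" for a b where
  zero: "0 \<in> gen2 a b"
| gen_a: "a \<in> gen2 a b"
| gen_b: "b \<in> gen2 a b"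
| add: "x \<in> gen2 a b \<Longrightarrow> y \<in> gen2 a b \<Longrightarrow> x + y \<in> gen2 a b"
| neg: "x \<in> gen2 a b \<Longrightarrow> - x \<in> gen2 a b"

definition generates2 :: "'a::ab_group_add \<Rightarrow> 'a \<Rightarrow> bool" where
  "generates2 a b \<longleftrightarrow> gen2 a b = UNIV"

definition cay_arcs :: "'a::ab_group_add \<Rightarrow> 'a \<Rightarrow> ('a \<times> 'a) set" where
  "cay_arcs a b = {(v, v + s) | v s. s \<in> {a, b}}"

definition components :: "'v set \<Rightarrow> ('v \<times> 'v) set \<Rightarrow> 'v set set" where
  "components V E = V // ((E \<union> E\<inverse>)\<^sup>* \<inter> (V \<times> V))"

definition arcs_in :: "'v set \<Rightarrow> ('v \<times> 'v) set \<Rightarrow> ('v \<times> 'v) set" where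
  "arcs_in C E = {e \<in> E. fst e \<in> C \<and> snd e \<in> C}"

definition is_dipath :: "'v set \<Rightarrow> ('v \<times> 'v) set \<Rightarrow> bool" where
  "is_dipath C F \<longleftrightarrow> (\<exists>xs. xs \<noteq> [] \<and> distinct xs \<and> set xs = C \<and> F = set (zip xs (tl xs)))"

definition is_dicycle :: "'v set \<Rightarrow> ('v \<times> 'v) set \<Rightarrow> bool" where
  "is_dicycle C F \<longleftrightarrow> (\<exists>xs. xs \<noteq> [] \<and> distinct xs \<and> set xs = C \<and> F = set (zip xs (tl xs @ [hd xs])))"

definition spanning_quasi_path :: "'v set \<Rightarrow> ('v \<times> 'v) set \<Rightarrow> ('v \<times> 'v) set \<Rightarrow> bool" where
  "spanning_quasi_path V A E \<longleftrightarrow>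
     E \<subseteq> A \<and>
     (\<forall>C \<in> components V E. is_dipath C (arcs_in C E) \<or> is_dicycle C (arcs_in C E)) \<and>
     card {C \<in> components V E. is_dipath C (arcs_in C E)} = 1"

definition delta_b :: "'a::ab_group_add \<Rightarrow> ('a \<times> 'a) set \<Rightarrow> nat" where
  "delta_b b E = card {e \<in> E. snd e = fst e + b}"

end

theory Submission
  imports Defs
begin


lemma peel:
  assumes inj: "inj_on f (-{t})"
  shows "(f^^i) u = (f^^i) w \<Longrightarrow> (\<forall>m<i. (f^^m) u \<noteq> t \<and> (f^^m) w \<noteq> t) \<Longrightarrow> u = w"
proof (induction i)
  case 0 then show ?case by simp
next
  case (Suc i)
  have "f ((f^^i) u) = f ((f^^i) w)" using Suc.prems(1) by simp
  moreover have "(f^^i) u \<noteq> t" "(f^^i) w \<noteq> t" using Suc.prems(2) by auto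
  ultimately have "(f^^i) u = (f^^i) w" using inj by (auto dest: inj_onD)
  then show ?case using Suc by auto
qed

lemma period:
  fixes f :: "'a::finite \<Rightarrow> 'a"
  assumes inj: "inj_on f (-{t})" and nt: "\<forall>i. (f^^i) v \<noteq> t"
  shows "\<exists>p>0. (f^^p) v = v"
proof -
  let ?N = "card (UNIV::'a set)"
  have "\<not> inj_on (\<lambda>i. (f^^i) v) {0..?N}"
  proof
    assume "inj_on (\<lambda>i. (f^^i) v) {0..?N}"
    then have "card ((\<lambda>i. (f^^i) v) ` {0..?N}) = Suc ?N"
      by (simp add: card_image)
    moreover have "card ((\<lambda>i. (f^^i) v) ` {0..?N}) \<le> ?N"
      by (rule card_mono) auto
    ultimately show False by simp
  qed
  then obtain i j where ij: "i \<noteq> j" "(f^^i) v = (f^^j) v"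
    unfolding inj_on_def by blast
  have "\<exists>i j. i < j \<and> (f^^i) v = (f^^j) v"
    using ij by (metis linorder_neqE_nat)
  then obtain i j where ij: "i < j" "(f^^i) v = (f^^j) v" by blast
  have "(f^^j) v = (f^^i) ((f^^(j-i)) v)"
    using ij(1) by (metis funpow_add le_add_diff_inverse less_imp_le o_apply)
  have nt2: "\<forall>m. (f^^m) ((f^^(j-i)) v) \<noteq> t" using nt by (metis comp_apply funpow_add)
  have "v = (f^^(j-i)) v"
    by (rule peel[OF inj, of i]) (use ij \<open>(f^^j) v = _\<close> nt nt2 in auto)
  then show ?thesis using ij(1) by (intro exI[of _ "j-i"]) auto
qed

lemma zip_tl_set: "set (zip xs (tl xs)) = {(xs!i, xs!Suc i) | i. Suc i < length xs}"
  by (auto simp: set_zip nth_tl)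

lemma last_not_arc: "distinct xs \<Longrightarrow> xs \<noteq> [] \<Longrightarrow> (last xs, y) \<notin> set (zip xs (tl xs))"
proof (induction xs rule: induct_list012)
  case (3 x z zs)
  then show ?case by auto
qed auto

lemma zip_tl_map: "set (zip (map h [0..<Suc L]) (tl (map h [0..<Suc L]))) = {(h i, h (Suc i)) | i. i < L}"
  unfolding zip_tl_set
proof safe
  fix i assume "i < L"
  then show "\<exists>ia. (h i, h (Suc i)) = (map h [0..<Suc L] ! ia, map h [0..<Suc L] ! Suc ia) \<and> Suc ia < length (map h [0..<Suc L])"
    by (intro exI[of _ i]) (simp del: upt_Suc)
qed (simp del: upt_Suc, blast)

lemma zip_tl_map2: "set (zip (map h [0..<p]) (tl (map h [0..<Suc p]))) = {(h i, h (Suc i)) | i. i < p}"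
proof -
  have "tl (map h [0..<Suc p]) = map (\<lambda>i. h (Suc i)) [0..<p]" by (simp only: map_upt_Suc list.sel)
  then have "zip (map h [0..<p]) (tl (map h [0..<Suc p])) = map (\<lambda>i. (h i, h (Suc i))) [0..<p]"
    by (simp add: zip_map_map zip_same_conv_map)
  then show ?thesis by auto
qed

lemma fg:
  fixes f :: "'a::finite \<Rightarrow> 'a" and t :: 'a
  assumes inj: "inj_on f (-{t})"
  defines "E \<equiv> {(v, f v) | v. v \<noteq> t}"
  shows "(\<forall>C\<in>components UNIV E. is_dipath C (arcs_in C E) \<or> is_dicycle C (arcs_in C E)) \<and>
         card {C \<in> components UNIV E. is_dipath C (arcs_in C E)} = 1"
proof -
  define R where "R = (E \<union> E\<inverse>)\<^sup>*"
  have comps: "components UNIV E = {R``{v} | v. True}"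
    unfolding components_def R_def quotient_def by auto
  have symR: "(y, x) \<in> R" if "(x, y) \<in> R" for x y
  proof -
    have "sym (E \<union> E\<inverse>)" by (auto simp: sym_def)
    then have "sym R" unfolding R_def by (rule sym_rtrancl)
    then show ?thesis using that by (auto simp: sym_def)
  qed
  have eqv: "equiv UNIV R"
    by (rule equivI) (auto simp: R_def refl_rtrancl trans_rtrancl intro: symR[unfolded R_def] simp: sym_def)
  have Rcl: "R``{v} \<subseteq> S" if "v \<in> S" "\<And>u. u \<noteq> t \<Longrightarrow> u \<in> S \<longleftrightarrow> f u \<in> S" for v S
  proof
    fix w assume "w \<in> R``{v}"
    then have "(v,w) \<in> (E \<union> E\<inverse>)\<^sup>*" by (simp add: R_def)
    then show "w \<in> S"
      by induction (use that in \<open>auto simp: E_def\<close>)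
  qed
  have fwd: "(v, (f^^i) v) \<in> R" if "\<forall>m<i. (f^^m) v \<noteq> t" for v i
    using that
  proof (induction i)
    case 0 then show ?case by (simp add: R_def)
  next
    case (Suc i)
    then have "(v, (f^^i) v) \<in> R" by simp
    moreover have "((f^^i) v, (f^^(Suc i)) v) \<in> E" using Suc.prems by (auto simp: E_def)
    ultimately show ?case unfolding R_def by (meson UnI1 rtrancl.rtrancl_into_rtrancl)
  qed
  have "card (f ` (-{t})) = card (-{t}::'a set)" using inj by (simp add: card_image)
  also have "\<dots> < card (UNIV::'a set)"
    by (metis Compl_eq_Diff_UNIV card_Diff1_less finite iso_tuple_UNIV_I)
  finally obtain s where s: "s \<notin> f ` (-{t})"
    by (metis UNIV_I less_irrefl subsetI subset_antisym)
  have "\<exists>i. (f^^i) s = t"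
  proof (rule ccontr)
    assume nn: "\<not> (\<exists>i. (f^^i) s = t)"
    then obtain p where p: "p > 0" "(f^^p) s = s" using period[OF inj] by blast
    then have "s = f ((f^^(p-1)) s)"
      by (metis Suc_pred' comp_apply funpow.simps(2))
    moreover have "(f^^(p-1)) s \<noteq> t" using nn by blast
    ultimately show False using s by blast
  qed
  define L where "L = (LEAST i. (f^^i) s = t)"
  have fL: "(f^^L) s = t" unfolding L_def by (rule LeastI_ex) fact
  have bL: "(f^^m) s \<noteq> t" if "m < L" for m
    using not_less_Least that unfolding L_def by blast
  define ps where "ps = map (\<lambda>i. (f^^i) s) [0..<Suc L]"
  define P where "P = set ps"
  have P_eq: "P = {(f^^i) s | i. i \<le> L}" unfolding P_def ps_def by (auto simp del: upt_Suc simp: less_Suc_eq_le)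
  have key: "(f^^i) s \<noteq> (f^^j) s" if "i < j" "j \<le> L" for i j
  proof
    assume eq: "(f^^i) s = (f^^j) s"
    have "(f^^j) s = (f^^i) ((f^^(j-i)) s)"
      using that(1) by (metis funpow_add le_add_diff_inverse less_imp_le o_apply)
    have nt2: "\<forall>m<i. (f^^m) ((f^^(j-i)) s) \<noteq> t"
    proof (intro allI impI)
      fix m assume "m < i"
      have "(f^^m) ((f^^(j-i)) s) = (f^^(m + (j-i))) s" by (simp add: funpow_add)
      moreover have "m + (j - i) < L" using \<open>m < i\<close> that by linarith
      ultimately show "(f^^m) ((f^^(j-i)) s) \<noteq> t" using bL by simp
    qed
    have "s = (f^^(j-i)) s"
      by (rule peel[OF inj, of i]) (use eq \<open>(f^^j) s = _\<close> nt2 bL that in auto)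
    also have "\<dots> = f ((f^^(j-i-1)) s)"
      using that by (metis Suc_diff_Suc comp_apply diff_Suc_1 funpow.simps(2) zero_less_diff)
    finally have "s = f ((f^^(j-i-1)) s)" .
    moreover have "(f^^(j-i-1)) s \<noteq> t" using bL that by simp
    ultimately show False using s by blast
  qed
  have dps: "distinct ps"
    unfolding ps_def distinct_map
  proof
    show "inj_on (\<lambda>i. (f ^^ i) s) (set [0..<Suc L])"
      unfolding inj_on_def
      by (metis atLeastLessThan_iff key less_Suc_eq_le linorder_neqE_nat set_upt)
  qed simp
  have RP: "R``{s} = P"
  proof
    show "R``{s} \<subseteq> P"
    proof (rule Rcl)
      show "s \<in> P" unfolding P_eq by (metis (mono_tags) funpow_0 le0 mem_Collect_eq)
      fix u assume "u \<noteq> t"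
      show "u \<in> P \<longleftrightarrow> f u \<in> P"
      proof
        assume "u \<in> P"
        then obtain i where i: "i \<le> L" "u = (f^^i) s" unfolding P_eq by blast
        then have "i < L" using fL \<open>u \<noteq> t\<close> le_neq_implies_less by blast
        then show "f u \<in> P" unfolding P_eq using i by (intro CollectI exI[of _ "Suc i"]) auto
      next
        assume "f u \<in> P"
        then obtain i where i: "i \<le> L" "f u = (f^^i) s" unfolding P_eq by blast
        show "u \<in> P"
        proof (cases i)
          case 0 then show ?thesis using i s \<open>u \<noteq> t\<close> by auto
        next
          case (Suc i')
          then have "f u = f ((f^^i') s)" using i by simp
          moreover have "(f^^i') s \<noteq> t" using bL Suc i by simp
          ultimately have "u = (f^^i') s" using inj \<open>u \<noteq> t\<close> by (auto dest: inj_onD)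
          then show ?thesis unfolding P_eq using Suc i by auto
        qed
      qed
    qed
    show "P \<subseteq> R``{s}"
      unfolding P_eq using fwd bL by auto
  qed
  have arcsP: "arcs_in P E = set (zip ps (tl ps))"
  proof -
    have "arcs_in P E = {((f^^i) s, (f^^(Suc i)) s) | i. i < L}"
    proof safe
      fix x y assume "(x,y) \<in> arcs_in P E"
      then obtain i where "x \<noteq> t" "y = f x" "i \<le> L" "x = (f^^i) s"
        unfolding arcs_in_def E_def P_eq by auto
      then show "\<exists>i. (x, y) = ((f ^^ i) s, (f ^^ Suc i) s) \<and> i < L"
        using fL le_neq_implies_less by (intro exI[of _ i]) (metis funpow.simps(2) o_apply)
    next
      fix i assume "i < L"
      then show "((f ^^ i) s, (f ^^ Suc i) s) \<in> arcs_in P E"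
      proof -
        have "(f ^^ i) s \<noteq> t" using bL \<open>i < L\<close> by simp
        moreover have "(f ^^ i) s \<in> P" unfolding P_eq using \<open>i < L\<close> by (intro CollectI exI[of _ i]) auto
        moreover have "(f ^^ Suc i) s \<in> P" unfolding P_eq using \<open>i < L\<close> by (intro CollectI exI[of _ "Suc i"]) auto
        ultimately show ?thesis unfolding arcs_in_def E_def by auto
      qed
    qed
    also have "\<dots> = set (zip ps (tl ps))"
      unfolding ps_def zip_tl_map ..
    finally show ?thesis .
  qed
  have dipP: "is_dipath P (arcs_in P E)"
    unfolding is_dipath_def arcsP using dps P_def ps_def by (intro exI[of _ ps]) (simp del: upt_Suc)
  have sR: "(s, t) \<in> R" using fwd[of L s] bL fL by simp
  have cyc: "is_dicycle (R``{v}) (arcs_in (R``{v}) E) \<and> (\<forall>u\<in>R``{v}. (u, f u) \<in> arcs_in (R``{v}) E)"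
    if ne: "R``{v} \<noteq> R``{s}" for v
  proof -
    have nt: "\<forall>i. (f^^i) v \<noteq> t"
    proof (rule ccontr)
      assume "\<not> ?thesis"
      then have ex: "\<exists>i. (f^^i) v = t" by blast
      define i0 where "i0 = (LEAST i. (f^^i) v = t)"
      have "(f^^i0) v = t" unfolding i0_def by (rule LeastI_ex) fact
      moreover have "\<forall>m<i0. (f^^m) v \<noteq> t" using not_less_Least unfolding i0_def by blast
      ultimately have "(v, t) \<in> R" using fwd[of i0 v] by simp
      moreover have "(t, s) \<in> R" by (rule symR[OF sR])
      ultimately have "(v, s) \<in> R" unfolding R_def by (rule rtrancl_trans)
      then have "R``{v} = R``{s}" by (rule equiv_class_eq[OF eqv])
      then show False using ne by simp
    qed
    have exp: "\<exists>p. p > 0 \<and> (f^^p) v = v" using period[OF inj nt] by blast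
    define p where "p = (LEAST p. p > 0 \<and> (f^^p) v = v)"
    have pp: "p > 0" "(f^^p) v = v" using LeastI_ex[OF exp] unfolding p_def by auto
    have pmin: "\<not> (q > 0 \<and> (f^^q) v = v)" if "q < p" for q
      using not_less_Least that unfolding p_def by blast
    have pq: "(f^^(p*q)) v = v" for q
      by (induction q) (auto simp: funpow_add pp)
    have mod: "(f^^i) v = (f^^(i mod p)) v" for i
    proof -
      have "(f^^i) v = (f^^(i mod p + p * (i div p))) v" by simp
      also have "\<dots> = (f^^(i mod p)) v" by (simp only: funpow_add o_apply pq)
      finally show ?thesis .
    qed
    define cs where "cs = map (\<lambda>i. (f^^i) v) [0..<p]"
    define Q where "Q = set cs"
    have Q_eq: "Q = range (\<lambda>i. (f^^i) v)" unfolding Q_def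
    proof
      show "set cs \<subseteq> range (\<lambda>i. (f ^^ i) v)" unfolding cs_def by auto
      show "range (\<lambda>i. (f ^^ i) v) \<subseteq> set cs"
      proof
        fix x assume "x \<in> range (\<lambda>i. (f ^^ i) v)"
        then obtain i where "x = (f^^i) v" by blast
        then have "x = (f^^(i mod p)) v" using mod by simp
        moreover have "i mod p < p" using pp(1) by simp
        ultimately show "x \<in> set cs" unfolding cs_def by auto
      qed
    qed
    have dcs: "distinct cs"
      unfolding cs_def distinct_map
    proof
      show "inj_on (\<lambda>i. (f ^^ i) v) (set [0..<p])"
      proof (rule inj_onI, rule ccontr)
        have k: False if "i < j" "j < p" "(f^^i) v = (f^^j) v" for i j
        proof -
          have jj: "(f^^j) v = (f^^i) ((f^^(j-i)) v)"
            using that(1) by (metis funpow_add le_add_diff_inverse less_imp_le o_apply)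
          have nt2: "\<forall>m. (f^^m) ((f^^(j-i)) v) \<noteq> t" using nt by (metis comp_apply funpow_add)
          have "v = (f^^(j-i)) v"
            by (rule peel[OF inj, of i]) (use that jj nt nt2 in auto)
          moreover have "j - i < p" using that by linarith
          ultimately show False using pmin[of "j-i"] that by (metis zero_less_diff)
        qed
        fix i j assume "i \<in> set [0..<p]" "j \<in> set [0..<p]" "(f ^^ i) v = (f ^^ j) v" "i \<noteq> j"
        then show False using k by (metis atLeastLessThan_iff linorder_neqE_nat set_upt)
      qed
    qed simp
    have RQ: "R``{v} = Q"
    proof
      show "R``{v} \<subseteq> Q"
      proof (rule Rcl)
        show "v \<in> Q" unfolding Q_eq by (metis funpow_0 rangeI)
        fix u assume "u \<noteq> t"
        show "u \<in> Q \<longleftrightarrow> f u \<in> Q"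
        proof
          assume "u \<in> Q"
          then obtain i where "u = (f^^i) v" unfolding Q_eq by blast
          then have "f u = (f^^(Suc i)) v" by simp
          then show "f u \<in> Q" unfolding Q_eq by blast
        next
          assume "f u \<in> Q"
          then obtain i where i: "f u = (f^^i) v" unfolding Q_eq by blast
          also have "\<dots> = (f^^i) ((f^^p) v)" using pp by simp
          also have "\<dots> = (f^^(Suc (i + p - 1))) v"
          proof -
            have "Suc (i+p-1) = i + p" using pp(1) by simp
            then show ?thesis by (simp only: funpow_add o_apply)
          qed
          also have "\<dots> = f ((f^^(i + p - 1)) v)" by simp
          finally have "u = (f^^(i + p - 1)) v" using inj nt \<open>u \<noteq> t\<close> by (auto dest: inj_onD)
          then show "u \<in> Q" unfolding Q_eq by blast
        qed
      qed
      show "Q \<subseteq> R``{v}" unfolding Q_eq using fwd nt by auto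
    qed
    have arcsQ: "arcs_in Q E = {(u, f u) | u. u \<in> Q}"
    proof -
      have "u \<noteq> t" "f u \<in> Q" if uQ: "u \<in> Q" for u
      proof -
        obtain i where "u = (f^^i) v" using uQ unfolding Q_eq by blast
        then show "u \<noteq> t" "f u \<in> Q" using nt unfolding Q_eq
          by (auto intro!: range_eqI[of _ _ "Suc i"])
      qed
      then show ?thesis unfolding arcs_in_def E_def by auto
    qed
    have "arcs_in Q E = {((f^^i) v, (f^^(Suc i)) v) | i. i < p}"
      unfolding arcsQ by (auto simp: Q_def cs_def)
    also have "\<dots> = set (zip cs (tl cs @ [hd cs]))"
    proof -
      have "tl cs @ [hd cs] = tl (map (\<lambda>i. (f^^i) v) [0..<Suc p])"
      proof -
        obtain q where q: "p = Suc q" using pp(1) by (cases p) auto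
        have "tl cs @ [hd cs] = map (\<lambda>i. (f^^(Suc i)) v) [0..<q] @ [v]"
          unfolding cs_def q map_upt_Suc by simp
        also have "\<dots> = map (\<lambda>i. (f^^(Suc i)) v) [0..<Suc q]"
          using pp(2) q by simp
        also have "\<dots> = tl (map (\<lambda>i. (f^^i) v) [0..<Suc p])"
          unfolding q map_upt_Suc[of _ "Suc q"] by simp
        finally show ?thesis .
      qed
      then have "set (zip cs (tl cs @ [hd cs])) = set (zip (map (\<lambda>i. (f^^i) v) [0..<p]) (tl (map (\<lambda>i. (f^^i) v) [0..<Suc p])))"
        by (simp only: cs_def)
      also have "\<dots> = {((f^^i) v, (f^^(Suc i)) v) | i. i < p}" by (rule zip_tl_map2)
      finally show ?thesis by (rule sym)
    qed
    finally have "is_dicycle Q (arcs_in Q E)"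
      unfolding is_dicycle_def using dcs Q_def pp(1) cs_def by (intro exI[of _ cs]) simp
    then show ?thesis using RQ arcsQ by auto
  qed
  have all: "\<forall>C\<in>components UNIV E. is_dipath C (arcs_in C E) \<or> is_dicycle C (arcs_in C E)"
  proof
    fix C assume "C \<in> components UNIV E"
    then obtain v where v: "C = R``{v}" unfolding comps by auto
    show "is_dipath C (arcs_in C E) \<or> is_dicycle C (arcs_in C E)"
    proof (cases "R``{v} = R``{s}")
      case True then show ?thesis using v RP dipP by simp
    next
      case False then show ?thesis using v cyc by simp
    qed
  qed
  have "{C \<in> components UNIV E. is_dipath C (arcs_in C E)} = {P}"
  proof (intro equalityI subsetI)
    fix C assume "C \<in> {C \<in> components UNIV E. is_dipath C (arcs_in C E)}"
    then have C: "C \<in> components UNIV E" "is_dipath C (arcs_in C E)" by auto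
    show "C \<in> {P}"
    proof -
    obtain v where v: "C = R``{v}" using C(1) unfolding comps by auto
    have "C = P"
    proof (rule ccontr)
      assume "C \<noteq> P"
      then have ne: "R``{v} \<noteq> R``{s}" using v RP by simp
      obtain xs where xs: "xs \<noteq> []" "distinct xs" "set xs = C" "arcs_in C E = set (zip xs (tl xs))"
        using C(2) unfolding is_dipath_def by blast
      have "last xs \<in> C" using xs by auto
      then have "(last xs, f (last xs)) \<in> set (zip xs (tl xs))" using cyc[OF ne] v xs(4) by auto
      then show False using last_not_arc xs by metis
    qed
    then show ?thesis by simp
    qed
  next
    fix C assume "C \<in> {P}"
    moreover have "P \<in> components UNIV E" unfolding comps using RP by auto
    ultimately show "C \<in> {C \<in> components UNIV E. is_dipath C (arcs_in C E)}" using dipP by simp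
  qed
  then show ?thesis using all by simp
qed



lemma step:
  fixes d :: "'a::{ab_group_add,finite}"
  assumes P0: "0 \<in> C" and P1: "\<forall>c\<in>C. c \<noteq> 0 \<longrightarrow> c + d \<in> C" and cg: "card C > 1"
  shows "\<exists>C'. 0 \<in> C' \<and> (\<forall>c\<in>C'. c \<noteq> 0 \<longrightarrow> c + d \<in> C') \<and> card C' = card C - 1"
proof (cases "\<exists>x\<in>C. x \<noteq> 0 \<and> x - d \<notin> C - {0, x}")
  case True
  then obtain x where x: "x \<in> C" "x \<noteq> 0" "x - d \<notin> C - {0,x}" by blast
  show ?thesis
  proof (intro exI[of _ "C - {x}"] conjI)
    show "0 \<in> C - {x}" using P0 x by auto
    show "\<forall>c\<in>C - {x}. c \<noteq> 0 \<longrightarrow> c + d \<in> C - {x}"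
    proof (intro ballI impI)
      fix c assume c: "c \<in> C - {x}" "c \<noteq> 0"
      then have "c + d \<in> C" using P1 by auto
      moreover have "c + d \<noteq> x"
      proof
        assume "c + d = x"
        then have "c = x - d" by (simp add: algebra_simps)
        then show False using c x by auto
      qed
      ultimately show "c + d \<in> C - {x}" by simp
    qed
    show "card (C - {x}) = card C - 1" using x by simp
  qed
next
  case False
  then have cl: "\<And>x. x \<in> C \<Longrightarrow> x \<noteq> 0 \<Longrightarrow> x - d \<in> C \<and> x - d \<noteq> 0" by auto
  define sh where "sh i x = ((\<lambda>z. z - d)^^i) x" for i x
  have shS: "sh (Suc i) x = sh i x - d" for i x by (simp add: sh_def)
  have sh0: "sh 0 x = x" for x by (simp add: sh_def)
  have sh_add: "sh i x = x + sh i 0" for i x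
    by (induction i) (simp_all add: shS sh0 algebra_simps)
  have sh_comp: "sh i (sh j x) = sh (i + j) x" for i j x by (simp add: sh_def funpow_add)
  let ?N = "card (UNIV::'a set)"
  have "\<not> inj_on (\<lambda>i. sh i 0) {0..?N}"
  proof
    assume "inj_on (\<lambda>i. sh i 0) {0..?N}"
    then have "card ((\<lambda>i. sh i 0) ` {0..?N}) = Suc ?N"
      by (simp add: card_image)
    moreover have "card ((\<lambda>i. sh i 0) ` {0..?N}) \<le> ?N"
      by (rule card_mono) auto
    ultimately show False by simp
  qed
  then obtain i j where ij: "i \<noteq> j" "sh i 0 = sh j 0"
    unfolding inj_on_def by blast
  have "\<exists>i j. i < j \<and> sh i 0 = sh j 0"
    using ij by (metis linorder_neqE_nat)
  then obtain i j where ij: "i < j" "sh i 0 = sh j 0" by blast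
  define p where "p = j - i"
  have pp: "p > 0" using ij p_def by simp
  have "sh j 0 = sh p (sh i 0)" using sh_comp ij(1) p_def by simp
  also have "\<dots> = sh i 0 + sh p 0" by (rule sh_add)
  finally have p0: "sh p 0 = 0" using ij(2) by simp
  have pq: "sh (p*q) 0 = 0" for q
  proof (induction q)
    case 0 then show ?case by (simp add: sh0)
  next
    case (Suc q)
    have "sh (p * Suc q) 0 = sh p (sh (p*q) 0)" by (simp add: sh_comp)
    then show ?case using Suc p0 by simp
  qed
  have "\<not> C \<subseteq> {0}"
  proof
    assume "C \<subseteq> {0}"
    then have "card C \<le> card {0::'a}" by (rule card_mono[rotated]) simp
    then show False using cg by simp
  qed
  then obtain y where y: "y \<in> C" "y \<noteq> 0" by blast
  define Ob where "Ob = range (\<lambda>i. sh i y)"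
  define Z where "Z = range (\<lambda>i. sh i 0)"
  have OC: "sh i y \<in> C \<and> sh i y \<noteq> 0" for i
    by (induction i) (use y cl in \<open>auto simp: sh0 shS\<close>)
  have ZC: "z \<in> Z \<Longrightarrow> z \<in> C \<Longrightarrow> z = 0" for z
  proof (rule ccontr)
    assume z: "z \<in> Z" "z \<in> C" "z \<noteq> 0"
    then obtain i where i: "z = sh i 0" unfolding Z_def by blast
    have zC: "sh k z \<in> C \<and> sh k z \<noteq> 0" for k
      by (induction k) (use z cl in \<open>auto simp: sh0 shS\<close>)
    have "sh ((p-1)*i) z = sh ((p-1)*i + i) 0" using i sh_comp by simp
    also have "(p-1)*i + i = p * i" using pp by (simp add: algebra_simps)
    finally have "sh ((p-1)*i) z = 0" using pq by simp
    then show False using zC by blast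
  qed
  have OZ: "Ob = (\<lambda>z. y + z) ` Z" unfolding Ob_def Z_def image_image by (simp only: sh_add[of _ y])
  have cardOZ: "card Ob = card Z" unfolding OZ by (rule card_image) (simp add: inj_on_def)
  have OsubC: "Ob \<subseteq> C" unfolding Ob_def using OC by auto
  have Ob0: "0 \<notin> Ob" unfolding Ob_def using OC by auto
  have Z0: "0 \<in> Z" unfolding Z_def using sh0 by (metis rangeI)
  define C' where "C' = (C - Ob) \<union> (Z - {0})"
  show ?thesis
  proof (intro exI[of _ C'] conjI)
    show "0 \<in> C'" unfolding C'_def using P0 Ob0 by simp
    show "\<forall>c\<in>C'. c \<noteq> 0 \<longrightarrow> c + d \<in> C'"
    proof (intro ballI impI)
      fix c assume c: "c \<in> C'" "c \<noteq> 0"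
      show "c + d \<in> C'"
      proof (cases "c \<in> C - Ob")
        case True
        then have "c + d \<in> C" using P1 c by auto
        moreover have "c + d \<notin> Ob"
        proof
          assume "c + d \<in> Ob"
          then obtain i where "c + d = sh i y" unfolding Ob_def by blast
          then have "c = sh (Suc i) y" by (simp add: shS algebra_simps)
          then show False using True unfolding Ob_def by auto
        qed
        ultimately show ?thesis unfolding C'_def by simp
      next
        case False
        then have "c \<in> Z" using c unfolding C'_def by auto
        then obtain i where i: "c = sh i 0" unfolding Z_def by blast
        have "sh (i + p) 0 = sh i (sh p 0)" using sh_comp by simp
        also have "\<dots> = c" using p0 i by (simp add: sh0)
        finally have "sh (Suc (i + p - 1)) 0 = c" using pp by simp
        then have "c + d = sh (i + p - 1) 0" by (simp add: shS algebra_simps)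
        then have "c + d \<in> Z" unfolding Z_def by blast
        then show ?thesis unfolding C'_def using P0 Ob0 by (cases "c + d = 0") auto
      qed
    qed
    have fin: "finite (C - Ob)" "finite (Z - {0})" by auto
    have disj: "(C - Ob) \<inter> (Z - {0}) = {}" using ZC by auto
    have "card C' = card (C - Ob) + card (Z - {0})"
      unfolding C'_def by (rule card_Un_disjoint[OF fin disj])
    also have "card (C - Ob) = card C - card Ob" using OsubC by (simp add: card_Diff_subset)
    also have "card (Z - {0}) = card Z - 1" using Z0 by simp
    also have "card Ob \<le> card C" using OsubC by (simp add: card_mono)
    moreover have "card Z \<ge> 1" using Z0 by (metis One_nat_def Suc_leI card_gt_0_iff empty_iff finite)
    ultimately show "card C' = card C - 1" using cardOZ by linarith
  qed
qed

lemma shrink: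
  fixes d :: "'a::{ab_group_add,finite}"
  shows "j < card (UNIV::'a set) \<Longrightarrow> \<exists>C. 0 \<in> C \<and> (\<forall>c\<in>C. c \<noteq> 0 \<longrightarrow> c + d \<in> C) \<and> card C = card (UNIV::'a set) - j"
proof (induction j)
  case 0
  then show ?case by (intro exI[of _ UNIV]) auto
next
  case (Suc j)
  then obtain C where C: "0 \<in> C" "\<forall>c\<in>C. c \<noteq> 0 \<longrightarrow> c + d \<in> C" "card C = card (UNIV::'a set) - j" by auto
  then have "card C > 1" using Suc.prems by simp
  then obtain C' where "0 \<in> C' \<and> (\<forall>c\<in>C'. c \<noteq> 0 \<longrightarrow> c + d \<in> C') \<and> card C' = card C - 1"
    using step[OF C(1,2)] by blast
  then show ?case using C(3) by (intro exI[of _ C']) auto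
qed


theorem mainTheorem19:
  fixes a b :: "'a::{ab_group_add, finite}" and k :: nat
  assumes "a \<noteq> b" and "generates2 a b" and "k < card (UNIV :: 'a set)"
  shows "\<exists>E. spanning_quasi_path UNIV (cay_arcs a b) E \<and> delta_b b E = k"
proof -
  obtain C where C: "0 \<in> C" "\<forall>c\<in>C. c \<noteq> 0 \<longrightarrow> c + (a - b) \<in> C"
      "card C = card (UNIV::'a set) - k"
    using shrink[OF assms(3), of "a - b"] by blast
  define f where "f v = (if v \<in> C then v + a else v + b)" for v
  have inj: "inj_on f (-{0})"
  proof (rule inj_onI)
    fix v w assume v: "v \<in> -{0}" and w: "w \<in> -{0}" and eq: "f v = f w"
    have no: False if "v \<in> C" "v \<noteq> 0" "w \<notin> C" "v + a = w + b" for v w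
    proof -
      have "w = v + (a - b)" using that(4) by (simp add: algebra_simps)
      then show False using that C(2) by auto
    qed
    show "v = w"
    proof (cases "v \<in> C"; cases "w \<in> C")
      assume "v \<in> C" "w \<notin> C" then show ?thesis using no[of v w] eq v by (simp add: f_def)
    next
      assume "v \<notin> C" "w \<in> C" then show ?thesis using no[of w v] eq w by (simp add: f_def)
    qed (use eq in \<open>auto simp: f_def\<close>)
  qed
  define E where "E = {(v, f v) | v. v \<noteq> 0}"
  have fgr: "(\<forall>C\<in>components UNIV E. is_dipath C (arcs_in C E) \<or> is_dicycle C (arcs_in C E)) \<and>
         card {C \<in> components UNIV E. is_dipath C (arcs_in C E)} = 1"
    unfolding E_def by (rule fg[OF inj])
  have sub: "E \<subseteq> cay_arcs a b"
    unfolding E_def cay_arcs_def f_def by auto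
  have "{e \<in> E. snd e = fst e + b} = (\<lambda>v. (v, v + b)) ` (-C)"
    using C(1) assms(1) unfolding E_def f_def by auto
  then have "delta_b b E = card (-C)"
    unfolding delta_b_def by (simp add: card_image inj_on_def)
  also have "\<dots> = k" using C(3) assms(3) by (simp add: Compl_eq_Diff_UNIV card_Diff_subset)
  finally show ?thesis using fgr sub unfolding spanning_quasi_path_def by blast
qed

end
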